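(* Let $s\in(0,1)$, let $E\subset\mathbb{R}^n$ be a set of locally finite $s$-perimeter and let $\Omega\subset\mathbb{R}^n$ be an open set. Then \[ \partial^-E\cap\Omega\neq\emptyset\ \Longrightarrow\ P_s^L(E,\Omega)>0. \] Moreover, if $\Omega$ is connected, \[ \partial^-E\cap\Omega=\emptyset\ \Longrightarrow\ P_s^L(E,\Omega)=0. \] Consequently, for every bounded connected open set $\Omega$, \[ P_s^L(E,\Omega)>0\ \Longleftrightarrow\ \partial^-E\cap\Omega\neq\emptyset. \]
   Context: $\mathcal L_s(A,B):=\int_A\int_B|x-y|^{-n-s}dx\,dy$; $P_s^L(E,\Omega):=\mathcal L_s(E\cap\Omega,E^c\cap\Omega)$; $P_s(E,\Omega):=P_s^L(E,\Omega)+\mathcal L_s(E\cap\Omega,E^c\setminus\Omega)+\mathcal L_s(E\setminus\Omega,E^c\cap\Omega)$. $E$ has locally finite $s$-perimeter if $P_s(E,\Omega)<\infty$ for every bounded open $\Omega$. $\partial^-E:=\{x: 0<|E\cap B_r(x)|<\omega_nr^n\ \forall r>0\}$, $\omega_n=|B_1|$. *)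

theory Defs
  imports "HOL-Analysis.Analysis"
begin

definition Ls :: "real \<Rightarrow> 'a::euclidean_space set \<Rightarrow> 'a set \<Rightarrow> ennreal" where
  "Ls s A B = (\<integral>\<^sup>+ x. (\<integral>\<^sup>+ y. indicator A x * indicator B y *
       ennreal (norm (x - y) powr (- (real DIM('a) + s))) \<partial>lebesgue) \<partial>lebesgue)"

definition PsL :: "real \<Rightarrow> 'a::euclidean_space set \<Rightarrow> 'a set \<Rightarrow> ennreal" where
  "PsL s E \<Omega> = Ls s (E \<inter> \<Omega>) (- E \<inter> \<Omega>)"

definition Ps :: "real \<Rightarrow> 'a::euclidean_space set \<Rightarrow> 'a set \<Rightarrow> ennreal" where
  "Ps s E \<Omega> = PsL s E \<Omega> + Ls s (E \<inter> \<Omega>) (- E - \<Omega>) + Ls s (E - \<Omega>) (- E \<inter> \<Omega>)"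

definition locally_finite_sper :: "real \<Rightarrow> 'a::euclidean_space set \<Rightarrow> bool" where
  "locally_finite_sper s E \<longleftrightarrow> (\<forall>\<Omega>. open \<Omega> \<and> bounded \<Omega> \<longrightarrow> Ps s E \<Omega> < \<infinity>)"

definition meas_boundary :: "'a::euclidean_space set \<Rightarrow> 'a set" where
  "meas_boundary E = {x. \<forall>r>0. 0 < emeasure lebesgue (E \<inter> ball x r) \<and>
                               emeasure lebesgue (E \<inter> ball x r) < emeasure lebesgue (ball x r)}"

end

theory Submission
  imports Defs
begin

lemma ball_not_null:
  fixes z :: "'a::euclidean_space"
  assumes "r > 0"
  shows "ball z r \<notin> null_sets lebesgue"
proof
  assume "ball z r \<in> null_sets lebesgue"
  hence "negligible (ball z r)" using negligible_iff_null_sets by blast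
  moreover have "ball z r \<noteq> {}" using assms by simp
  ultimately show False using open_not_negligible[of "ball z r"] by auto
qed

lemma pos_part:
  fixes s :: real and E \<Omega> :: "'a::euclidean_space set"
  assumes s: "0 < s" and E: "E \<in> sets lebesgue"
    and x: "x \<in> meas_boundary E" and r: "r > 0" and sub: "ball x r \<subseteq> \<Omega>"
  shows "PsL s E \<Omega> > 0"
proof -
  define B where "B = ball x r"
  have Bm: "B \<in> sets lebesgue" unfolding B_def by (simp add: lmeasurable_ball fmeasurableD)
  have cE: "-E \<in> sets lebesgue" using E using sets.compl_sets[OF E] by (simp add: Compl_eq_Diff_UNIV)
  have A1m: "E \<inter> B \<in> sets lebesgue" using E Bm by auto
  have A2m: "-E \<inter> B \<in> sets lebesgue" using cE Bm by auto
  have m1: "0 < emeasure lebesgue (E \<inter> B)" and m1': "emeasure lebesgue (E \<inter> B) < emeasure lebesgue B"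
    using x r unfolding meas_boundary_def B_def by auto
  have Bfin: "emeasure lebesgue B \<noteq> \<infinity>" using lmeasurable_ball[of x r] by (simp add: fmeasurable_def B_def)
  have "emeasure lebesgue (-E \<inter> B) = emeasure lebesgue (B - (E \<inter> B))"
    by (metis Diff_Int2 Diff_eq inf_commute Int_absorb)
  also have "\<dots> = emeasure lebesgue B - emeasure lebesgue (E \<inter> B)"
    using Bfin m1' A1m Bm by (intro emeasure_Diff) auto
  finally have m2: "0 < emeasure lebesgue (-E \<inter> B)"
    using m1' by (simp add: diff_gr0_ennreal)
  define a where "a = - (real DIM('a) + s)"
  have a: "a \<le> 0" unfolding a_def using s by simp
  define c where "c = (2*r) powr a"
  have c: "c > 0" unfolding c_def using r by simp
  have ker: "ennreal c \<le> ennreal (norm (u - y) powr a)" if "u \<in> E \<inter> B" "y \<in> -E \<inter> B" for u y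
  proof -
    have "u \<noteq> y" using that by auto
    hence "norm (u - y) > 0" by simp
    moreover have "norm (u - y) \<le> 2*r"
    proof -
      have "norm (u - y) \<le> dist x u + dist x y" using that
        by (metis dist_norm dist_triangle2 dist_commute)
      also have "\<dots> \<le> 2*r" using that unfolding B_def by auto
      finally show ?thesis .
    qed
    ultimately show ?thesis unfolding c_def using powr_mono2'[OF a] by (intro ennreal_leI) auto
  qed
  have inner: "ennreal c * emeasure lebesgue (-E \<inter> B) \<le>
      (\<integral>\<^sup>+ y. indicator (E \<inter> \<Omega>) u * indicator (- E \<inter> \<Omega>) y *
       ennreal (norm (u - y) powr (- (real DIM('a) + s))) \<partial>lebesgue)" if u: "u \<in> E \<inter> B" for u
  proof -
    have "ennreal c * emeasure lebesgue (-E \<inter> B) = (\<integral>\<^sup>+ y. ennreal c * indicator (-E \<inter> B) y \<partial>lebesgue)"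
      using A2m by (simp add: nn_integral_cmult_indicator)
    also have "\<dots> \<le> (\<integral>\<^sup>+ y. indicator (E \<inter> \<Omega>) u * indicator (- E \<inter> \<Omega>) y *
       ennreal (norm (u - y) powr (- (real DIM('a) + s))) \<partial>lebesgue)"
    proof (intro nn_integral_mono)
      fix y
      show "ennreal c * indicator (- E \<inter> B) y \<le> indicator (E \<inter> \<Omega>) u * indicator (- E \<inter> \<Omega>) y *
       ennreal (norm (u - y) powr (- (real DIM('a) + s)))"
      proof (cases "y \<in> -E \<inter> B")
        case True
        have "u \<in> E \<inter> \<Omega>" "y \<in> -E \<inter> \<Omega>" using u True sub unfolding B_def by auto
        then show ?thesis using ker[OF u True] True unfolding a_def by simp
      qed simp
    qed
    finally show ?thesis .
  qed
  have "ennreal c * emeasure lebesgue (-E \<inter> B) * emeasure lebesgue (E \<inter> B)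
      = (\<integral>\<^sup>+ u. (ennreal c * emeasure lebesgue (-E \<inter> B)) * indicator (E \<inter> B) u \<partial>lebesgue)"
    using A1m by (simp add: nn_integral_cmult_indicator)
  also have "\<dots> \<le> PsL s E \<Omega>"
    unfolding PsL_def Ls_def
  proof (intro nn_integral_mono)
    fix u
    show "ennreal c * emeasure lebesgue (- E \<inter> B) * indicator (E \<inter> B) u \<le>
         (\<integral>\<^sup>+ y. indicator (E \<inter> \<Omega>) u * indicator (- E \<inter> \<Omega>) y *
       ennreal (norm (u - y) powr (- (real DIM('a) + s))) \<partial>lebesgue)"
      using inner[of u] by (cases "u \<in> E \<inter> B") auto
  qed
  finally show ?thesis using c m1 m2
    by (metis ennreal_zero_less_mult_iff ennreal_less_zero_iff order_less_le_trans)
qed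

lemma null_cover:
  fixes F S :: "'a::euclidean_space set"
  assumes F: "F \<in> sets lebesgue" and S: "S \<in> sets lebesgue" and cov: "S \<subseteq> \<Union>\<U>"
    and U: "\<And>U. U \<in> \<U> \<Longrightarrow> open U \<and> F \<inter> U \<in> null_sets lebesgue"
  shows "F \<inter> S \<in> null_sets lebesgue"
proof -
  obtain \<V> where V: "\<V> \<subseteq> \<U>" "countable \<V>" "\<Union>\<V> = \<Union>\<U>" using Lindelof[of \<U>] U by blast
  have "(\<Union>V\<in>\<V>. F \<inter> V) \<in> null_sets lebesgue"
    using V U by (intro null_sets_UN') auto
  moreover have "F \<inter> S \<subseteq> (\<Union>V\<in>\<V>. F \<inter> V)" using cov V by auto
  ultimately show ?thesis using F S by (meson null_sets_subset sets.Int)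
qed

lemma zero_part:
  fixes s :: real and E \<Omega> :: "'a::euclidean_space set"
  assumes E: "E \<in> sets lebesgue" and O: "open \<Omega>" and C: "connected \<Omega>"
    and nb: "meas_boundary E \<inter> \<Omega> = {}"
  shows "PsL s E \<Omega> = 0"
proof -
  have cE: "-E \<in> sets lebesgue" using E using sets.compl_sets[OF E] by (simp add: Compl_eq_Diff_UNIV)
  have Om: "\<Omega> \<in> sets lebesgue" using O by (simp add: borel_open sets_completionI_sets)
  define U1 where "U1 = \<Union>{ball x r | x r. r > 0 \<and> E \<inter> ball x r \<in> null_sets lebesgue}"
  define U2 where "U2 = \<Union>{ball x r | x r. r > 0 \<and> -E \<inter> ball x r \<in> null_sets lebesgue}"
  have o1: "open U1" "open U2" unfolding U1_def U2_def by auto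
  have cov: "\<Omega> \<subseteq> U1 \<union> U2"
  proof
    fix x assume xO: "x \<in> \<Omega>"
    hence "x \<notin> meas_boundary E" using nb by blast
    hence "\<exists>r>0. \<not> (0 < emeasure lebesgue (E \<inter> ball x r) \<and> emeasure lebesgue (E \<inter> ball x r) < emeasure lebesgue (ball x r))"
      unfolding meas_boundary_def by blast
    then obtain r where r: "r > 0" and
      h: "\<not> (0 < emeasure lebesgue (E \<inter> ball x r) \<and> emeasure lebesgue (E \<inter> ball x r) < emeasure lebesgue (ball x r))"
      by blast
    have Bm: "ball x r \<in> sets lebesgue" by (simp add: lmeasurable_ball fmeasurableD)
    have Bfin: "emeasure lebesgue (ball x r) \<noteq> \<infinity>"
      using lmeasurable_ball[of x r] by (simp add: fmeasurable_def)
    show "x \<in> U1 \<union> U2"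
    proof (cases "emeasure lebesgue (E \<inter> ball x r) = 0")
      case True
      hence "E \<inter> ball x r \<in> null_sets lebesgue" by (rule null_setsI) (use E Bm in auto)
      moreover have "x \<in> ball x r" using r by simp
      ultimately show ?thesis unfolding U1_def using r by blast
    next
      case False
      hence ge: "emeasure lebesgue (ball x r) \<le> emeasure lebesgue (E \<inter> ball x r)" using h
        by (simp add: not_less) 
      have "emeasure lebesgue (-E \<inter> ball x r) = emeasure lebesgue (ball x r - (E \<inter> ball x r))"
        by (metis Diff_Int2 Diff_eq inf_commute Int_absorb)
      also have "\<dots> = emeasure lebesgue (ball x r) - emeasure lebesgue (E \<inter> ball x r)"
      proof (rule emeasure_Diff)
        have "emeasure lebesgue (E \<inter> ball x r) \<le> emeasure lebesgue (ball x r)"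
          by (rule emeasure_mono) (use Bm in auto)
        then show "emeasure lebesgue (E \<inter> ball x r) \<noteq> \<infinity>" using Bfin by (simp add: top.not_eq_extremum order.strict_trans1)
      qed (use E Bm in auto)
      also have "\<dots> = 0" using ge Bfin by (intro diff_eq_0_ennreal) (auto simp: top.not_eq_extremum)
      finally have "-E \<inter> ball x r \<in> null_sets lebesgue" by (rule null_setsI) (use cE Bm in auto)
      moreover have "x \<in> ball x r" using r by simp
      ultimately show ?thesis unfolding U2_def using r by blast
    qed
  qed
  have disj: "U1 \<inter> U2 = {}"
  proof (rule ccontr)
    assume "U1 \<inter> U2 \<noteq> {}"
    then obtain z x1 r1 x2 r2 where z: "z \<in> ball x1 r1" "z \<in> ball x2 r2"
      and n1: "E \<inter> ball x1 r1 \<in> null_sets lebesgue" and n2: "-E \<inter> ball x2 r2 \<in> null_sets lebesgue"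
      unfolding U1_def U2_def by blast
    obtain \<rho> where \<rho>: "\<rho> > 0" "ball z \<rho> \<subseteq> ball x1 r1" "ball z \<rho> \<subseteq> ball x2 r2"
      using z by (metis Elementary_Metric_Spaces.open_ball Int_iff Int_subset_iff open_Int open_contains_ball)
    have "ball z \<rho> \<subseteq> (E \<inter> ball x1 r1) \<union> (-E \<inter> ball x2 r2)" using \<rho> by auto
    hence "ball z \<rho> \<in> null_sets lebesgue" using n1 n2
      by (meson null_sets.Un null_sets_subset lmeasurable_ball fmeasurableD)
    then show False using ball_not_null[OF \<rho>(1)] by blast
  qed
  have "\<Omega> \<inter> U1 = {} \<or> \<Omega> \<inter> U2 = {}"
    using C o1 cov disj unfolding connected_def by blast
  then show ?thesis
  proof
    assume "\<Omega> \<inter> U1 = {}"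
    hence "\<Omega> \<subseteq> \<Union>{ball x r | x r. r > 0 \<and> -E \<inter> ball x r \<in> null_sets lebesgue}"
      using cov unfolding U2_def by blast
    hence N: "-E \<inter> \<Omega> \<in> null_sets lebesgue" using null_cover[OF cE Om] by blast
    have inner0: "(\<integral>\<^sup>+ y. indicator (E \<inter> \<Omega>) u * indicator (- E \<inter> \<Omega>) y *
       ennreal (norm (u - y) powr (- (real DIM('a) + s))) \<partial>lebesgue) = 0" for u
    proof -
      have "(\<integral>\<^sup>+ y. indicator (E \<inter> \<Omega>) u * indicator (- E \<inter> \<Omega>) y *
       ennreal (norm (u - y) powr (- (real DIM('a) + s))) \<partial>lebesgue) = (\<integral>\<^sup>+ y. 0 \<partial>(lebesgue :: 'a measure))"
        by (rule nn_integral_cong_AE, rule eventually_mono[OF AE_not_in[OF N]]) (auto split: split_indicator)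
      then show ?thesis by simp
    qed
    have "PsL s E \<Omega> = (\<integral>\<^sup>+ x. 0 \<partial>lebesgue)"
      unfolding PsL_def Ls_def inner0 by simp
    then show ?thesis by simp
  next
    assume "\<Omega> \<inter> U2 = {}"
    hence "\<Omega> \<subseteq> \<Union>{ball x r | x r. r > 0 \<and> E \<inter> ball x r \<in> null_sets lebesgue}"
      using cov unfolding U1_def by blast
    hence N: "E \<inter> \<Omega> \<in> null_sets lebesgue" using null_cover[OF E Om] by blast
    have "PsL s E \<Omega> = (\<integral>\<^sup>+ x. 0 \<partial>(lebesgue :: 'a measure))"
      unfolding PsL_def Ls_def
      by (rule nn_integral_cong_AE, rule eventually_mono[OF AE_not_in[OF N]]) (auto split: split_indicator)
    then show ?thesis by simp
  qed
qed

theorem proposition3p2: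
  fixes s :: real and E \<Omega> :: "'a::euclidean_space set"
  assumes "0 < s" and "s < 1"
    and "E \<in> sets lebesgue"
    and "locally_finite_sper s E"
    and "open \<Omega>"
  shows "(meas_boundary E \<inter> \<Omega> \<noteq> {} \<longrightarrow> PsL s E \<Omega> > 0)
    \<and> (connected \<Omega> \<longrightarrow> meas_boundary E \<inter> \<Omega> = {} \<longrightarrow> PsL s E \<Omega> = 0)
    \<and> (bounded \<Omega> \<and> connected \<Omega> \<longrightarrow> (PsL s E \<Omega> > 0 \<longleftrightarrow> meas_boundary E \<inter> \<Omega> \<noteq> {}))"
proof -
  have P1: "PsL s E \<Omega> > 0" if ne: "meas_boundary E \<inter> \<Omega> \<noteq> {}"
  proof -
    obtain x where x: "x \<in> meas_boundary E" "x \<in> \<Omega>" using ne by blast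
    obtain r where "r > 0" "ball x r \<subseteq> \<Omega>" using assms(5) x(2) open_contains_ball by blast
    then show ?thesis using pos_part[OF assms(1) assms(3) x(1)] by blast
  qed
  have P2: "PsL s E \<Omega> = 0" if "connected \<Omega>" "meas_boundary E \<inter> \<Omega> = {}"
    using zero_part[OF assms(3) assms(5) that] .
  show ?thesis using P1 P2 by auto
qed

end
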